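(* Let $\mathcal{D}$ be a liability category, let $N=(G,X,\lambda,\iota;\delta,\hat\alpha)$ be a liability network in $\mathcal{D}$ with underlying finite directed graph $G=(V,E,s,t)$, and let $\mathcal{L}$ be its liability sheaf on the liability hypergraph $\mathcal{H}_G$. Then the assignment sending a global section $\sigma\in\Gamma(\mathcal{H}_G;\mathcal{L})$ to the family of its components $(x_v)_{v\in V}$, $x_v=\sigma_v:1\to X_v$, and $(p_e)_{e\in E}$, $p_e=\sigma_{e^*}:1\to X_{s(e)}^{\lambda_e}$, is a bijection from $\Gamma(\mathcal{H}_G;\mathcal{L})$ onto the set of families of global elements $x_v:1\to X_v$ ($v\in V$), $p_e:1\to X_{s(e)}^{\lambda_e}$ ($e\in E$) satisfying \[ p_e=\delta_e\circ x_{s(e)}\ \text{ for all } e\in E,\qquad x_v=\alpha_v\circ\langle p_e\rangle_{t(e)=v}\ \text{ for all } v\in V. \] In other words, a global section is uniquely determined by such elements satisfying these two equations, and every such family arises from a global section.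
   Context: A liability category is a category $\mathcal{D}$ such that: (1) $\mathcal{D}$ has a terminal object $1$, all finite products, and equalizers; (2) for each object $P$ the set $\mathrm{Hom}(1,P)$ of global elements carries a partial order $\leqslant$, and for each morphism $f:P\to Q$ the map $f_*:\mathrm{Hom}(1,P)\to\mathrm{Hom}(1,Q)$, $\rho\mapsto f\circ\rho$, is order-preserving; (3) for each $P$ there is a distinguished class $\mathcal{S}_P$ of monomorphisms $m:P^c\hookrightarrow P$ (one representative per subobject class), called constraint subobjects, stable under pullback: if $m\in\mathcal{S}_P$ and $f:Q\to P$, a chosen pullback $f^*m$ lies in $\mathcal{S}_Q$; (4) for each $P$ a bound selector $\beta_P:\mathrm{Hom}(1,P)\to\mathcal{S}_P$; (5) for every finite family $(P_i)$ the canonical map $\mathrm{Hom}(1,\prod_i P_i)\to\prod_i\mathrm{Hom}(1,P_i)$ is an order isomorphism for the componentwise order. A liability network in $\mathcal{D}$ is $N=(G,X,\lambda,\iota;\delta,\hat\alpha)$ where $G=(V,E,s,t)$ is a finite directed graph; $X_v\in\mathcal{D}$ ($v\in V$) are payment objects; $\lambda_e:1\to X_{s(e)}$ ($e\in E$) are liability morphisms; $\iota_v:1\to X_v$ are exogenous resource morphisms; writing $X_{s(e)}^{\lambda_e}$ for the domain of the constraint subobject $\beta_{X_{s(e)}}(\lambda_e)\hookrightarrow X_{s(e)}$, $\delta_e:X_{s(e)}\to X_{s(e)}^{\lambda_e}$ are distributor morphisms; and $\hat\alpha_v:X_v\times\prod_{t(e)=v}X_{s(e)}^{\lambda_e}\to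 X_v$ are aggregator morphisms. The partial aggregator is $\alpha_v:=\hat\alpha_v\circ(\iota_v\times\mathrm{id}):\prod_{t(e)=v}X_{s(e)}^{\lambda_e}\to X_v$ (via $\prod\cong 1\times\prod$); an empty product is the terminal object $1$. The liability hypergraph $\mathcal{H}_G$ has vertex set $V\sqcup\{e^*:e\in E\}$ and hyperedges $h_v^{\delta}$ ($v\in V$) with source $\{v\}$ and target $\{e^*:s(e)=v\}$, and $h_v^{\alpha}$ ($v\in V$) with empty source and target $\{e^*:t(e)=v\}\cup\{v\}$. Its incidence category $\mathcal{I}(\mathcal{H}_G)$ has as objects the vertices and hyperedges, with exactly one morphism $h\to w$ for each hyperedge $h$ and each vertex $w$ in the source or target of $h$, plus identities, and no other morphisms. The liability sheaf is the functor $\mathcal{L}:\mathcal{I}(\mathcal{H}_G)\to\mathcal{D}$ with $\mathcal{L}(v)=X_v$, $\mathcal{L}(e^* )=X_{s(e)}^{\lambda_e}$, $\mathcal{L}(h_v^\delta)=X_v$, $\mathcal{L}(h_v^\alpha)=\prod_{t(e)=v}X_{s(e)}^{\lambda_e}$, and $\mathcal{L}(h_v^\delta\to v)=\mathrm{id}_{X_v}$, $\mathcal{L}(h_v^\delta\to e^* )=\delta_e$, $\mathcal{L}(h_v^\alpha\to e^* )=\pi_e$ (product projection), $\mathcal{L}(h_v^\alpha\to v)=\alpha_v$. The global-section object is $H^0(\mathcal{H}_G;\mathcal{L})=\lim_{\mathcal{I}(\mathcal{H}_G)}\mathcal{L}$ and the set of global sections is $\Gamma(\mathcal{H}_G;\mathcal{L})=\mathrm{Hom}_{\mathcal{D}}(1,H^0(\mathcal{H}_G;\mathcal{L}))$;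 for $\sigma\in\Gamma$ and an object $y$ of $\mathcal{I}(\mathcal{H}_G)$, $\sigma_y$ denotes the composite of $\sigma$ with the limit projection to $\mathcal{L}(y)$. *)

theory Defs
  imports "HOL-Library.FuncSet"
begin

record ('o,'m) cat =
  Ob  :: "'o set"
  Ar  :: "'m set"
  Dom :: "'m \<Rightarrow> 'o"
  Cod :: "'m \<Rightarrow> 'o"
  Cmp :: "'m \<Rightarrow> 'm \<Rightarrow> 'm"   (* Cmp g f = g o f *)
  Idn :: "'o \<Rightarrow> 'm"

definition hom :: "('o,'m,'z) cat_scheme \<Rightarrow> 'o \<Rightarrow> 'o \<Rightarrow> 'm set" where
  "hom C a b = {f \<in> Ar C. Dom C f = a \<and> Cod C f = b}"

definition category :: "('o,'m,'z) cat_scheme \<Rightarrow> bool" where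
  "category C \<longleftrightarrow>
     (\<forall>f\<in>Ar C. Dom C f \<in> Ob C \<and> Cod C f \<in> Ob C) \<and>
     (\<forall>a\<in>Ob C. Idn C a \<in> hom C a a) \<and>
     (\<forall>f\<in>Ar C. \<forall>g\<in>Ar C. Cod C f = Dom C g \<longrightarrow> Cmp C g f \<in> hom C (Dom C f) (Cod C g)) \<and>
     (\<forall>f\<in>Ar C. Cmp C (Idn C (Cod C f)) f = f \<and> Cmp C f (Idn C (Dom C f)) = f) \<and>
     (\<forall>f\<in>Ar C. \<forall>g\<in>Ar C. \<forall>h\<in>Ar C. Cod C f = Dom C g \<longrightarrow> Cod C g = Dom C h \<longrightarrow>
         Cmp C h (Cmp C g f) = Cmp C (Cmp C h g) f)"

definition terminal :: "('o,'m,'z) cat_scheme \<Rightarrow> 'o \<Rightarrow> bool" where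
  "terminal C t \<longleftrightarrow> t \<in> Ob C \<and> (\<forall>a\<in>Ob C. \<exists>!f. f \<in> hom C a t)"

definition term_map :: "('o,'m,'z) cat_scheme \<Rightarrow> 'o \<Rightarrow> 'o \<Rightarrow> 'm" where
  "term_map C t a = (THE f. f \<in> hom C a t)"

definition is_product ::
  "('o,'m,'z) cat_scheme \<Rightarrow> 'i set \<Rightarrow> ('i \<Rightarrow> 'o) \<Rightarrow> 'o \<Rightarrow> ('i \<Rightarrow> 'm) \<Rightarrow> bool" where
  "is_product C I Xs P pr \<longleftrightarrow> P \<in> Ob C \<and>
     (\<forall>i\<in>I. Xs i \<in> Ob C \<and> pr i \<in> hom C P (Xs i)) \<and>
     (\<forall>A\<in>Ob C. \<forall>f. (\<forall>i\<in>I. f i \<in> hom C A (Xs i)) \<longrightarrow>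
        (\<exists>!u. u \<in> hom C A P \<and> (\<forall>i\<in>I. Cmp C (pr i) u = f i)))"

definition tup ::
  "('o,'m,'z) cat_scheme \<Rightarrow> 'i set \<Rightarrow> 'o \<Rightarrow> ('i \<Rightarrow> 'm) \<Rightarrow> 'o \<Rightarrow> ('i \<Rightarrow> 'm) \<Rightarrow> 'm" where
  "tup C I P pr A f = (THE u. u \<in> hom C A P \<and> (\<forall>i\<in>I. Cmp C (pr i) u = f i))"

definition is_equalizer :: "('o,'m,'z) cat_scheme \<Rightarrow> 'm \<Rightarrow> 'm \<Rightarrow> 'o \<Rightarrow> 'm \<Rightarrow> bool" where
  "is_equalizer C f g E e \<longleftrightarrow> E \<in> Ob C \<and> e \<in> hom C E (Dom C f) \<and> Cmp C f e = Cmp C g e \<and>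
     (\<forall>A\<in>Ob C. \<forall>h\<in>hom C A (Dom C f). Cmp C f h = Cmp C g h \<longrightarrow>
        (\<exists>!u. u \<in> hom C A E \<and> Cmp C e u = h))"

definition mono :: "('o,'m,'z) cat_scheme \<Rightarrow> 'm \<Rightarrow> bool" where
  "mono C m \<longleftrightarrow> m \<in> Ar C \<and> (\<forall>A\<in>Ob C. \<forall>h\<in>hom C A (Dom C m). \<forall>k\<in>hom C A (Dom C m).
      Cmp C m h = Cmp C m k \<longrightarrow> h = k)"

definition same_subobject :: "('o,'m,'z) cat_scheme \<Rightarrow> 'm \<Rightarrow> 'm \<Rightarrow> bool" where
  "same_subobject C m m' \<longleftrightarrow> Cod C m = Cod C m' \<and>
     (\<exists>i\<in>hom C (Dom C m) (Dom C m'). \<exists>j\<in>hom C (Dom C m') (Dom C m).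
        Cmp C j i = Idn C (Dom C m) \<and> Cmp C i j = Idn C (Dom C m') \<and> Cmp C m' i = m)"

definition is_pullback :: "('o,'m,'z) cat_scheme \<Rightarrow> 'm \<Rightarrow> 'm \<Rightarrow> 'm \<Rightarrow> 'm \<Rightarrow> bool" where
  "is_pullback C f m f' m' \<longleftrightarrow>
     f \<in> Ar C \<and> m \<in> Ar C \<and> Cod C f = Cod C m \<and>
     m' \<in> hom C (Dom C m') (Dom C f) \<and> f' \<in> hom C (Dom C m') (Dom C m) \<and>
     Cmp C f m' = Cmp C m f' \<and>
     (\<forall>A\<in>Ob C. \<forall>a\<in>hom C A (Dom C f). \<forall>b\<in>hom C A (Dom C m). Cmp C f a = Cmp C m b \<longrightarrow>
        (\<exists>!u. u \<in> hom C A (Dom C m') \<and> Cmp C m' u = a \<and> Cmp C f' u = b))"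

record ('o,'m) lcat = "('o,'m) cat" +
  one  :: 'o
  leq  :: "'o \<Rightarrow> 'm \<Rightarrow> 'm \<Rightarrow> bool"   (* order on Hom(1,P) *)
  Sc   :: "'o \<Rightarrow> 'm set"
  beta :: "'o \<Rightarrow> 'm \<Rightarrow> 'm"

definition liability_category :: "('o,'m) lcat \<Rightarrow> bool" where
  "liability_category D \<longleftrightarrow>
     category D \<and> terminal D (one D) \<and>
     (\<forall>(n::nat) Xs. (\<forall>i<n. Xs i \<in> Ob D) \<longrightarrow> (\<exists>P pr. is_product D {..<n} Xs P pr)) \<and>
     (\<forall>f\<in>Ar D. \<forall>g\<in>Ar D. Dom D f = Dom D g \<and> Cod D f = Cod D g \<longrightarrow>
        (\<exists>E e. is_equalizer D f g E e)) \<and>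
     (\<forall>P\<in>Ob D. (\<forall>r\<in>hom D (one D) P. leq D P r r) \<and>
        (\<forall>r\<in>hom D (one D) P. \<forall>r'\<in>hom D (one D) P. leq D P r r' \<and> leq D P r' r \<longrightarrow> r = r') \<and>
        (\<forall>r\<in>hom D (one D) P. \<forall>r'\<in>hom D (one D) P. \<forall>r''\<in>hom D (one D) P.
            leq D P r r' \<and> leq D P r' r'' \<longrightarrow> leq D P r r'')) \<and>
     (\<forall>P\<in>Ob D. \<forall>Q\<in>Ob D. \<forall>f\<in>hom D P Q. \<forall>r\<in>hom D (one D) P. \<forall>r'\<in>hom D (one D) P.
        leq D P r r' \<longrightarrow> leq D Q (Cmp D f r) (Cmp D f r')) \<and>
     (\<forall>P\<in>Ob D. (\<forall>m\<in>Sc D P. mono D m \<and> Cod D m = P) \<and>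
        (\<forall>m\<in>Sc D P. \<forall>m'\<in>Sc D P. same_subobject D m m' \<longrightarrow> m = m')) \<and>
     (\<forall>P\<in>Ob D. \<forall>m\<in>Sc D P. \<forall>Q\<in>Ob D. \<forall>f\<in>hom D Q P.
        \<exists>m'\<in>Sc D Q. \<exists>f'. is_pullback D f m f' m') \<and>
     (\<forall>P\<in>Ob D. \<forall>r\<in>hom D (one D) P. beta D P r \<in> Sc D P) \<and>
     (\<forall>(n::nat) Xs P pr. is_product D {..<n} Xs P pr \<longrightarrow>
        (\<forall>r\<in>hom D (one D) P. \<forall>r'\<in>hom D (one D) P.
           leq D P r r' \<longleftrightarrow> (\<forall>i<n. leq D (Xs i) (Cmp D (pr i) r) (Cmp D (pr i) r'))))"

text \<open>Products are fixed as part of the data: Pp v is the product of the X^{lambda_e}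
  over the edges e with tgt e = v (projections Ppr v e), XPp v is the binary product
  X_v x Pp v with projections XPpr v True / XPpr v False.\<close>
record ('o,'m,'v,'e) lnet =
  Vs   :: "'v set"
  Es   :: "'e set"
  src  :: "'e \<Rightarrow> 'v"
  tgt  :: "'e \<Rightarrow> 'v"
  Xo   :: "'v \<Rightarrow> 'o"
  lam  :: "'e \<Rightarrow> 'm"
  iota :: "'v \<Rightarrow> 'm"
  dlt  :: "'e \<Rightarrow> 'm"
  Pp   :: "'v \<Rightarrow> 'o"
  Ppr  :: "'v \<Rightarrow> 'e \<Rightarrow> 'm"
  XPp  :: "'v \<Rightarrow> 'o"
  XPpr :: "'v \<Rightarrow> bool \<Rightarrow> 'm"
  ahat :: "'v \<Rightarrow> 'm"

text \<open>X_{s(e)}^{lambda_e}: domain of the constraint subobject beta(lambda_e).\<close>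
definition Xl :: "('o,'m) lcat \<Rightarrow> ('o,'m,'v,'e) lnet \<Rightarrow> 'e \<Rightarrow> 'o" where
  "Xl D N e = Dom D (beta D (Xo N (src N e)) (lam N e))"

definition in_edges :: "('o,'m,'v,'e) lnet \<Rightarrow> 'v \<Rightarrow> 'e set" where
  "in_edges N v = {e \<in> Es N. tgt N e = v}"

definition XPfam :: "('o,'m,'v,'e) lnet \<Rightarrow> 'v \<Rightarrow> bool \<Rightarrow> 'o" where
  "XPfam N v b = (if b then Xo N v else Pp N v)"

definition liability_network :: "('o,'m) lcat \<Rightarrow> ('o,'m,'v,'e) lnet \<Rightarrow> bool" where
  "liability_network D N \<longleftrightarrow>
     finite (Vs N) \<and> finite (Es N) \<and>
     (\<forall>e\<in>Es N. src N e \<in> Vs N \<and> tgt N e \<in> Vs N) \<and>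
     (\<forall>v\<in>Vs N. Xo N v \<in> Ob D) \<and>
     (\<forall>e\<in>Es N. lam N e \<in> hom D (one D) (Xo N (src N e))) \<and>
     (\<forall>v\<in>Vs N. iota N v \<in> hom D (one D) (Xo N v)) \<and>
     (\<forall>e\<in>Es N. dlt N e \<in> hom D (Xo N (src N e)) (Xl D N e)) \<and>
     (\<forall>v\<in>Vs N. is_product D (in_edges N v) (Xl D N) (Pp N v) (Ppr N v)) \<and>
     (\<forall>v\<in>Vs N. is_product D (UNIV::bool set) (XPfam N v) (XPp N v) (XPpr N v)) \<and>
     (\<forall>v\<in>Vs N. ahat N v \<in> hom D (XPp N v) (Xo N v))"

text \<open>Partial aggregator alpha_v = ahat_v o (iota_v x id) o (Pp v = 1 x Pp v),
  i.e. ahat_v o <iota_v o !, id>.\<close>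
definition alpha :: "('o,'m) lcat \<Rightarrow> ('o,'m,'v,'e) lnet \<Rightarrow> 'v \<Rightarrow> 'm" where
  "alpha D N v = Cmp D (ahat N v)
     (tup D (UNIV::bool set) (XPp N v) (XPpr N v) (Pp N v)
        (\<lambda>b. if b then Cmp D (iota N v) (term_map D (one D) (Pp N v)) else Idn D (Pp N v)))"

datatype ('v,'e) iobj = IV 'v | IE 'e | HD 'v | HA 'v
  (* vertex v, vertex e*, hyperedge h_v^delta, hyperedge h_v^alpha *)

datatype ('v,'e) iarr = DV 'v | DE 'e | AE 'e | AV 'v
  (* h_v^delta -> v, h_{s e}^delta -> e*, h_{t e}^alpha -> e*, h_v^alpha -> v *)

definition IObj :: "('o,'m,'v,'e) lnet \<Rightarrow> ('v,'e) iobj set" where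
  "IObj N = IV ` Vs N \<union> IE ` Es N \<union> HD ` Vs N \<union> HA ` Vs N"

definition IArr :: "('o,'m,'v,'e) lnet \<Rightarrow> ('v,'e) iarr set" where
  "IArr N = DV ` Vs N \<union> DE ` Es N \<union> AE ` Es N \<union> AV ` Vs N"

fun isrc :: "('o,'m,'v,'e) lnet \<Rightarrow> ('v,'e) iarr \<Rightarrow> ('v,'e) iobj" where
  "isrc N (DV v) = HD v"
| "isrc N (DE e) = HD (src N e)"
| "isrc N (AE e) = HA (tgt N e)"
| "isrc N (AV v) = HA v"

fun itgt :: "('o,'m,'v,'e) lnet \<Rightarrow> ('v,'e) iarr \<Rightarrow> ('v,'e) iobj" where
  "itgt N (DV v) = IV v"
| "itgt N (DE e) = IE e"
| "itgt N (AE e) = IE e"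
| "itgt N (AV v) = IV v"

fun Lobj :: "('o,'m) lcat \<Rightarrow> ('o,'m,'v,'e) lnet \<Rightarrow> ('v,'e) iobj \<Rightarrow> 'o" where
  "Lobj D N (IV v) = Xo N v"
| "Lobj D N (IE e) = Xl D N e"
| "Lobj D N (HD v) = Xo N v"
| "Lobj D N (HA v) = Pp N v"

fun Larr :: "('o,'m) lcat \<Rightarrow> ('o,'m,'v,'e) lnet \<Rightarrow> ('v,'e) iarr \<Rightarrow> 'm" where
  "Larr D N (DV v) = Idn D (Xo N v)"
| "Larr D N (DE e) = dlt N e"
| "Larr D N (AE e) = Ppr N (tgt N e) e"
| "Larr D N (AV v) = alpha D N v"

text \<open>Cones over the liability sheaf (identities of the incidence category impose no condition)
  and limits (the global-section object H^0 with its limit projections c).\<close>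
definition is_cone :: "('o,'m) lcat \<Rightarrow> ('o,'m,'v,'e) lnet \<Rightarrow> 'o \<Rightarrow> (('v,'e) iobj \<Rightarrow> 'm) \<Rightarrow> bool" where
  "is_cone D N A c \<longleftrightarrow> A \<in> Ob D \<and>
     (\<forall>y\<in>IObj N. c y \<in> hom D A (Lobj D N y)) \<and>
     (\<forall>a\<in>IArr N. Cmp D (Larr D N a) (c (isrc N a)) = c (itgt N a))"

definition is_limit :: "('o,'m) lcat \<Rightarrow> ('o,'m,'v,'e) lnet \<Rightarrow> 'o \<Rightarrow> (('v,'e) iobj \<Rightarrow> 'm) \<Rightarrow> bool" where
  "is_limit D N H c \<longleftrightarrow> is_cone D N H c \<and>
     (\<forall>A d. is_cone D N A d \<longrightarrow>
        (\<exists>!u. u \<in> hom D A H \<and> (\<forall>y\<in>IObj N. Cmp D (c y) u = d y)))"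

definition solution_families :: "('o,'m) lcat \<Rightarrow> ('o,'m,'v,'e) lnet \<Rightarrow> (('v \<Rightarrow> 'm) \<times> ('e \<Rightarrow> 'm)) set" where
  "solution_families D N = {(x, p).
     x \<in> extensional (Vs N) \<and> p \<in> extensional (Es N) \<and>
     (\<forall>v\<in>Vs N. x v \<in> hom D (one D) (Xo N v)) \<and>
     (\<forall>e\<in>Es N. p e \<in> hom D (one D) (Xl D N e)) \<and>
     (\<forall>e\<in>Es N. p e = Cmp D (dlt N e) (x (src N e))) \<and>
     (\<forall>v\<in>Vs N. x v = Cmp D (alpha D N v) (tup D (in_edges N v) (Pp N v) (Ppr N v) (one D) p))}"

end

theory Submission
  imports Defs
begin

lemma hom_ob:
  assumes "category C" "f \<in> hom C a b" shows "a \<in> Ob C" "b \<in> Ob C" "f \<in> Ar C"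
  using assms unfolding category_def hom_def by auto

lemma comp_hom:
  assumes "category C" "f \<in> hom C a b" "g \<in> hom C b d" shows "Cmp C g f \<in> hom C a d"
  using assms unfolding category_def hom_def by auto

lemma comp_assoc:
  assumes "category C" "f \<in> hom C a b" "g \<in> hom C b d" "h \<in> hom C d k"
  shows "Cmp C h (Cmp C g f) = Cmp C (Cmp C h g) f"
  using assms unfolding category_def hom_def by auto

lemma id_left:
  assumes "category C" "f \<in> hom C a b" shows "Cmp C (Idn C b) f = f"
  using assms unfolding category_def hom_def by auto

lemma id_hom:
  assumes "category C" "a \<in> Ob C" shows "Idn C a \<in> hom C a a"
  using assms unfolding category_def by auto

lemma term_map_hom:
  assumes "terminal C t" "a \<in> Ob C" shows "term_map C t a \<in> hom C a t"
proof -
  have "\<exists>!f. f \<in> hom C a t" using assms unfolding terminal_def by auto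
  then show ?thesis unfolding term_map_def by (rule theI')
qed

lemma tup_prop:
  assumes "is_product C I Xs P pr" "A \<in> Ob C" "\<forall>i\<in>I. f i \<in> hom C A (Xs i)"
  shows "tup C I P pr A f \<in> hom C A P \<and> (\<forall>i\<in>I. Cmp C (pr i) (tup C I P pr A f) = f i)"
proof -
  have "\<exists>!u. u \<in> hom C A P \<and> (\<forall>i\<in>I. Cmp C (pr i) u = f i)"
    using assms unfolding is_product_def by blast
  then show ?thesis unfolding tup_def by (rule theI')
qed

lemma tup_unique:
  assumes "is_product C I Xs P pr" "A \<in> Ob C" "\<forall>i\<in>I. f i \<in> hom C A (Xs i)"
    "u \<in> hom C A P" "\<forall>i\<in>I. Cmp C (pr i) u = f i"
  shows "u = tup C I P pr A f"
proof -
  have "\<exists>!u. u \<in> hom C A P \<and> (\<forall>i\<in>I. Cmp C (pr i) u = f i)"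
    using assms unfolding is_product_def by blast
  then show ?thesis using assms tup_prop[OF assms(1-3)] by blast
qed

theorem mainTheorem1:
  fixes D :: "('o,'m) lcat" and N :: "('o,'m,'v,'e) lnet"
    and H :: 'o and c :: "('v,'e) iobj \<Rightarrow> 'm"
  assumes "liability_category D"
    and "liability_network D N"
    and "is_limit D N H c"
  shows "bij_betw
           (\<lambda>\<sigma>. (\<lambda>v\<in>Vs N. Cmp D (c (IV v)) \<sigma>, \<lambda>e\<in>Es N. Cmp D (c (IE e)) \<sigma>))
           (hom D (one D) H)
           (solution_families D N)"
proof -
  have cat: "category D" and trm: "terminal D (one D)"
    using assms(1) unfolding liability_category_def by auto
  have one_ob: "one D \<in> Ob D" using trm unfolding terminal_def by auto
  note net = assms(2)[unfolded liability_network_def]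
  have src_in: "\<And>e. e \<in> Es N \<Longrightarrow> src N e \<in> Vs N" and tgt_in: "\<And>e. e \<in> Es N \<Longrightarrow> tgt N e \<in> Vs N"
    using net by auto
  have Xo_ob: "\<And>v. v \<in> Vs N \<Longrightarrow> Xo N v \<in> Ob D" using net by auto
  have iota_hom: "\<And>v. v \<in> Vs N \<Longrightarrow> iota N v \<in> hom D (one D) (Xo N v)" using net by auto
  have dlt_hom: "\<And>e. e \<in> Es N \<Longrightarrow> dlt N e \<in> hom D (Xo N (src N e)) (Xl D N e)" using net by auto
  have prodP: "\<And>v. v \<in> Vs N \<Longrightarrow> is_product D (in_edges N v) (Xl D N) (Pp N v) (Ppr N v)"
    using net by auto
  have prodXP: "\<And>v. v \<in> Vs N \<Longrightarrow> is_product D (UNIV::bool set) (XPfam N v) (XPp N v) (XPpr N v)"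
    using net by auto
  have ahat_hom: "\<And>v. v \<in> Vs N \<Longrightarrow> ahat N v \<in> hom D (XPp N v) (Xo N v)" using net by auto
  have Pp_ob: "\<And>v. v \<in> Vs N \<Longrightarrow> Pp N v \<in> Ob D" using prodP unfolding is_product_def by auto
  have Ppr_hom: "\<And>v e. v \<in> Vs N \<Longrightarrow> e \<in> in_edges N v \<Longrightarrow> Ppr N v e \<in> hom D (Pp N v) (Xl D N e)"
    using prodP unfolding is_product_def by auto
  have alpha_hom: "\<And>v. v \<in> Vs N \<Longrightarrow> alpha D N v \<in> hom D (Pp N v) (Xo N v)"
  proof -
    fix v assume v: "v \<in> Vs N"
    let ?f = "\<lambda>b. if b then Cmp D (iota N v) (term_map D (one D) (Pp N v)) else Idn D (Pp N v)"
    have "\<forall>b\<in>UNIV. ?f b \<in> hom D (Pp N v) (XPfam N v b)"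
      using comp_hom[OF cat term_map_hom[OF trm Pp_ob[OF v]] iota_hom[OF v]]
        id_hom[OF cat Pp_ob[OF v]] by (auto simp: XPfam_def)
    from tup_prop[OF prodXP[OF v] Pp_ob[OF v] this]
    have "tup D UNIV (XPp N v) (XPpr N v) (Pp N v) ?f \<in> hom D (Pp N v) (XPp N v)" by blast
    from comp_hom[OF cat this ahat_hom[OF v]] show "alpha D N v \<in> hom D (Pp N v) (Xo N v)"
      unfolding alpha_def .
  qed
  have inE: "\<And>e. e \<in> Es N \<Longrightarrow> e \<in> in_edges N (tgt N e)" unfolding in_edges_def by auto
  have inE2: "\<And>e v. e \<in> in_edges N v \<Longrightarrow> e \<in> Es N \<and> tgt N e = v" unfolding in_edges_def by auto
  have arr: "\<And>a. a \<in> IArr N \<Longrightarrow> isrc N a \<in> IObj N \<and> itgt N a \<in> IObj N \<and>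
      Larr D N a \<in> hom D (Lobj D N (isrc N a)) (Lobj D N (itgt N a))"
  proof -
    fix a assume "a \<in> IArr N"
    then show "isrc N a \<in> IObj N \<and> itgt N a \<in> IObj N \<and>
      Larr D N a \<in> hom D (Lobj D N (isrc N a)) (Lobj D N (itgt N a))"
      unfolding IArr_def
    proof (elim UnE imageE)
      fix v assume v: "v \<in> Vs N" and a: "a = DV v"
      show ?thesis unfolding a IObj_def using v id_hom[OF cat Xo_ob[OF v]] by simp
    next
      fix e assume e: "e \<in> Es N" and a: "a = DE e"
      show ?thesis unfolding a IObj_def using e src_in[OF e] dlt_hom[OF e] by simp
    next
      fix e assume e: "e \<in> Es N" and a: "a = AE e"
      show ?thesis unfolding a IObj_def using e tgt_in[OF e] Ppr_hom[OF tgt_in[OF e] inE[OF e]] by simp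
    next
      fix v assume v: "v \<in> Vs N" and a: "a = AV v"
      show ?thesis unfolding a IObj_def using v alpha_hom[OF v] by simp
    qed
  qed
  note lim = assms(3)[unfolded is_limit_def]
  have cone: "is_cone D N H c" using lim by blast
  have c_hom: "\<And>y. y \<in> IObj N \<Longrightarrow> c y \<in> hom D H (Lobj D N y)" using cone unfolding is_cone_def by auto
  have c_eq: "\<And>a. a \<in> IArr N \<Longrightarrow> Cmp D (Larr D N a) (c (isrc N a)) = c (itgt N a)"
    using cone unfolding is_cone_def by auto
  have H_ob: "H \<in> Ob D" using cone unfolding is_cone_def by auto
  have IV_in: "\<And>v. v \<in> Vs N \<Longrightarrow> IV v \<in> IObj N" and HD_in: "\<And>v. v \<in> Vs N \<Longrightarrow> HD v \<in> IObj N"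
    and HA_in: "\<And>v. v \<in> Vs N \<Longrightarrow> HA v \<in> IObj N" and IE_in: "\<And>e. e \<in> Es N \<Longrightarrow> IE e \<in> IObj N"
    unfolding IObj_def by auto
  have DV_in: "\<And>v. v \<in> Vs N \<Longrightarrow> DV v \<in> IArr N" and AV_in: "\<And>v. v \<in> Vs N \<Longrightarrow> AV v \<in> IArr N"
    and DE_in: "\<And>e. e \<in> Es N \<Longrightarrow> DE e \<in> IArr N" and AE_in: "\<And>e. e \<in> Es N \<Longrightarrow> AE e \<in> IArr N"
    unfolding IArr_def by auto
  have cHD: "\<And>v. v \<in> Vs N \<Longrightarrow> c (HD v) = c (IV v)"
  proof -
    fix v assume v: "v \<in> Vs N"
    have "c (HD v) \<in> hom D H (Xo N v)" using c_hom[OF HD_in[OF v]] by simp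
    from id_left[OF cat this] c_eq[OF DV_in[OF v]] show "c (HD v) = c (IV v)" by simp
  qed
  have cone_s: "\<And>\<sigma>. \<sigma> \<in> hom D (one D) H \<Longrightarrow> is_cone D N (one D) (\<lambda>y. Cmp D (c y) \<sigma>)"
  proof -
    fix \<sigma> assume s: "\<sigma> \<in> hom D (one D) H"
    show "is_cone D N (one D) (\<lambda>y. Cmp D (c y) \<sigma>)"
      unfolding is_cone_def
    proof (intro conjI ballI)
      show "one D \<in> Ob D" by (rule one_ob)
    next
      fix y assume "y \<in> IObj N"
      from comp_hom[OF cat s c_hom[OF this]] show "Cmp D (c y) \<sigma> \<in> hom D (one D) (Lobj D N y)" .
    next
      fix a assume a: "a \<in> IArr N"
      have "Cmp D (Larr D N a) (Cmp D (c (isrc N a)) \<sigma>) = Cmp D (Cmp D (Larr D N a) (c (isrc N a))) \<sigma>"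
        using comp_assoc[OF cat s c_hom[OF conjunct1[OF arr[OF a]]] conjunct2[OF conjunct2[OF arr[OF a]]]] .
      then show "Cmp D (Larr D N a) (Cmp D (c (isrc N a)) \<sigma>) = Cmp D (c (itgt N a)) \<sigma>"
        using c_eq[OF a] by simp
    qed
  qed
  have cHA: "\<And>\<sigma> v. \<sigma> \<in> hom D (one D) H \<Longrightarrow> v \<in> Vs N \<Longrightarrow>
      Cmp D (c (HA v)) \<sigma> = tup D (in_edges N v) (Pp N v) (Ppr N v) (one D) (\<lambda>e\<in>Es N. Cmp D (c (IE e)) \<sigma>)"
  proof -
    fix \<sigma> v assume s: "\<sigma> \<in> hom D (one D) H" and v: "v \<in> Vs N"
    have cha: "c (HA v) \<in> hom D H (Pp N v)" using c_hom[OF HA_in[OF v]] by simp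
    show "?thesis \<sigma> v"
    proof (rule tup_unique[OF prodP[OF v] one_ob])
      show "\<forall>i\<in>in_edges N v. (\<lambda>e\<in>Es N. Cmp D (c (IE e)) \<sigma>) i \<in> hom D (one D) (Xl D N i)"
        using comp_hom[OF cat s c_hom[OF IE_in]] inE2 by auto
      show "Cmp D (c (HA v)) \<sigma> \<in> hom D (one D) (Pp N v)" using comp_hom[OF cat s cha] .
      show "\<forall>i\<in>in_edges N v. Cmp D (Ppr N v i) (Cmp D (c (HA v)) \<sigma>) = (\<lambda>e\<in>Es N. Cmp D (c (IE e)) \<sigma>) i"
      proof
        fix e assume e: "e \<in> in_edges N v"
        have "Cmp D (Ppr N v e) (Cmp D (c (HA v)) \<sigma>) = Cmp D (Cmp D (Ppr N v e) (c (HA v))) \<sigma>"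
          using comp_assoc[OF cat s cha Ppr_hom[OF v e]] .
        also have "Cmp D (Ppr N v e) (c (HA v)) = c (IE e)"
          using c_eq[OF AE_in] inE2[OF e] by fastforce
        finally show "Cmp D (Ppr N v e) (Cmp D (c (HA v)) \<sigma>) = (\<lambda>e\<in>Es N. Cmp D (c (IE e)) \<sigma>) e"
          using inE2[OF e] by simp
      qed
    qed
  qed
  let ?F = "\<lambda>\<sigma>. (\<lambda>v\<in>Vs N. Cmp D (c (IV v)) \<sigma>, \<lambda>e\<in>Es N. Cmp D (c (IE e)) \<sigma>)"
  show ?thesis
    unfolding bij_betw_def
  proof (intro conjI)
    show "inj_on ?F (hom D (one D) H)"
    proof (rule inj_onI)
      fix \<sigma> \<sigma>' assume s: "\<sigma> \<in> hom D (one D) H" and s': "\<sigma>' \<in> hom D (one D) H" and eq: "?F \<sigma> = ?F \<sigma>'"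
      have eqV': "(\<lambda>v\<in>Vs N. Cmp D (c (IV v)) \<sigma>) = (\<lambda>v\<in>Vs N. Cmp D (c (IV v)) \<sigma>')"
        using eq by simp
      have eqV: "\<And>v. v \<in> Vs N \<Longrightarrow> Cmp D (c (IV v)) \<sigma> = Cmp D (c (IV v)) \<sigma>'"
      proof -
        fix v assume v: "v \<in> Vs N"
        from fun_cong[OF eqV', of v] v show "Cmp D (c (IV v)) \<sigma> = Cmp D (c (IV v)) \<sigma>'" by simp
      qed
      have eqE: "(\<lambda>e\<in>Es N. Cmp D (c (IE e)) \<sigma>) = (\<lambda>e\<in>Es N. Cmp D (c (IE e)) \<sigma>')"
        using eq by simp
      have all: "\<forall>y\<in>IObj N. Cmp D (c y) \<sigma>' = Cmp D (c y) \<sigma>"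
      proof
        fix y assume y: "y \<in> IObj N"
        then show "Cmp D (c y) \<sigma>' = Cmp D (c y) \<sigma>"
          unfolding IObj_def
        proof (elim UnE imageE)
          fix v assume "v \<in> Vs N" "y = IV v" then show ?thesis using eqV by simp
        next
          fix e assume "e \<in> Es N" "y = IE e" then show ?thesis using fun_cong[OF eqE, of e] by simp
        next
          fix v assume "v \<in> Vs N" "y = HD v" then show ?thesis using eqV cHD by simp
        next
          fix v assume "v \<in> Vs N" "y = HA v" then show ?thesis using cHA[OF s] cHA[OF s'] eqE by simp
        qed
      qed
      have "\<exists>!u. u \<in> hom D (one D) H \<and> (\<forall>y\<in>IObj N. Cmp D (c y) u = Cmp D (c y) \<sigma>)"
        using lim cone_s[OF s] by blast
      then show "\<sigma> = \<sigma>'" using s s' all by blast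
    qed
  next
    show "?F ` hom D (one D) H = solution_families D N"
    proof
      show "?F ` hom D (one D) H \<subseteq> solution_families D N"
      proof
        fix z assume "z \<in> ?F ` hom D (one D) H"
        then obtain \<sigma> where s: "\<sigma> \<in> hom D (one D) H" and z: "z = ?F \<sigma>" by blast
        have h1: "\<forall>v\<in>Vs N. Cmp D (c (IV v)) \<sigma> \<in> hom D (one D) (Xo N v)"
          using comp_hom[OF cat s c_hom[OF IV_in]] by simp
        have h2: "\<forall>e\<in>Es N. Cmp D (c (IE e)) \<sigma> \<in> hom D (one D) (Xl D N e)"
          using comp_hom[OF cat s c_hom[OF IE_in]] by simp
        have h3: "\<forall>e\<in>Es N. Cmp D (c (IE e)) \<sigma> = Cmp D (dlt N e) (Cmp D (c (IV (src N e))) \<sigma>)"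
        proof
          fix e assume e: "e \<in> Es N"
          have ch: "c (HD (src N e)) \<in> hom D H (Xo N (src N e))" using c_hom[OF HD_in[OF src_in[OF e]]] by simp
          have "Cmp D (dlt N e) (Cmp D (c (IV (src N e))) \<sigma>) = Cmp D (dlt N e) (Cmp D (c (HD (src N e))) \<sigma>)"
            using cHD[OF src_in[OF e]] by simp
          also have "\<dots> = Cmp D (Cmp D (dlt N e) (c (HD (src N e)))) \<sigma>"
            using comp_assoc[OF cat s ch dlt_hom[OF e]] .
          also have "Cmp D (dlt N e) (c (HD (src N e))) = c (IE e)" using c_eq[OF DE_in[OF e]] by simp
          finally show "Cmp D (c (IE e)) \<sigma> = Cmp D (dlt N e) (Cmp D (c (IV (src N e))) \<sigma>)" by simp
        qed
        have h4: "\<forall>v\<in>Vs N. Cmp D (c (IV v)) \<sigma> = Cmp D (alpha D N v)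
             (tup D (in_edges N v) (Pp N v) (Ppr N v) (one D) (\<lambda>e\<in>Es N. Cmp D (c (IE e)) \<sigma>))"
        proof
          fix v assume v: "v \<in> Vs N"
          have cha: "c (HA v) \<in> hom D H (Pp N v)" using c_hom[OF HA_in[OF v]] by simp
          have "Cmp D (alpha D N v) (Cmp D (c (HA v)) \<sigma>) = Cmp D (Cmp D (alpha D N v) (c (HA v))) \<sigma>"
            using comp_assoc[OF cat s cha alpha_hom[OF v]] .
          also have "Cmp D (alpha D N v) (c (HA v)) = c (IV v)" using c_eq[OF AV_in[OF v]] by simp
          finally show "Cmp D (c (IV v)) \<sigma> = Cmp D (alpha D N v)
             (tup D (in_edges N v) (Pp N v) (Ppr N v) (one D) (\<lambda>e\<in>Es N. Cmp D (c (IE e)) \<sigma>))"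
            using cHA[OF s v] by simp
        qed
        show "z \<in> solution_families D N"
          unfolding z solution_families_def using h1 h2 h3 h4 src_in by auto
      qed
    next
      show "solution_families D N \<subseteq> ?F ` hom D (one D) H"
      proof
        fix z assume "z \<in> solution_families D N"
        then obtain x p where z: "z = (x, p)" and xe: "x \<in> extensional (Vs N)" and pe: "p \<in> extensional (Es N)"
          and xh: "\<forall>v\<in>Vs N. x v \<in> hom D (one D) (Xo N v)"
          and ph: "\<forall>e\<in>Es N. p e \<in> hom D (one D) (Xl D N e)"
          and pd: "\<forall>e\<in>Es N. p e = Cmp D (dlt N e) (x (src N e))"
          and xa: "\<forall>v\<in>Vs N. x v = Cmp D (alpha D N v) (tup D (in_edges N v) (Pp N v) (Ppr N v) (one D) p)"
          unfolding solution_families_def by blast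
        define d where "d = (\<lambda>y. case y of IV v \<Rightarrow> x v | IE e \<Rightarrow> p e | HD v \<Rightarrow> x v
              | HA v \<Rightarrow> tup D (in_edges N v) (Pp N v) (Ppr N v) (one D) p)"
        have phi: "\<And>v. v \<in> Vs N \<Longrightarrow> \<forall>i\<in>in_edges N v. p i \<in> hom D (one D) (Xl D N i)"
          using ph inE2 by blast
        have tp: "\<And>v. v \<in> Vs N \<Longrightarrow> tup D (in_edges N v) (Pp N v) (Ppr N v) (one D) p \<in> hom D (one D) (Pp N v)
            \<and> (\<forall>i\<in>in_edges N v. Cmp D (Ppr N v i) (tup D (in_edges N v) (Pp N v) (Ppr N v) (one D) p) = p i)"
          using tup_prop[OF prodP one_ob phi] by blast
        have dcone: "is_cone D N (one D) d"
          unfolding is_cone_def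
        proof (intro conjI ballI)
          show "one D \<in> Ob D" by (rule one_ob)
        next
          fix y assume "y \<in> IObj N"
          then show "d y \<in> hom D (one D) (Lobj D N y)"
            unfolding IObj_def
          proof (elim UnE imageE)
            fix v assume "v \<in> Vs N" "y = IV v" then show ?thesis using xh by (simp add: d_def)
          next
            fix e assume "e \<in> Es N" "y = IE e" then show ?thesis using ph by (simp add: d_def)
          next
            fix v assume "v \<in> Vs N" "y = HD v" then show ?thesis using xh by (simp add: d_def)
          next
            fix v assume v: "v \<in> Vs N" "y = HA v" then show ?thesis using tp[OF v(1)] by (simp add: d_def)
          qed
        next
          fix a assume "a \<in> IArr N"
          then show "Cmp D (Larr D N a) (d (isrc N a)) = d (itgt N a)"
            unfolding IArr_def
          proof (elim UnE imageE)
            fix v assume v: "v \<in> Vs N" "a = DV v" then show ?thesis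
              using id_left[OF cat bspec[OF xh v(1)]] by (simp add: d_def)
          next
            fix e assume e: "e \<in> Es N" "a = DE e" then show ?thesis using pd by (simp add: d_def)
          next
            fix e assume e: "e \<in> Es N" "a = AE e" then show ?thesis
              using tp[OF tgt_in[OF e(1)]] inE[OF e(1)] by (simp add: d_def)
          next
            fix v assume v: "v \<in> Vs N" "a = AV v" then show ?thesis using xa by (simp add: d_def)
          qed
        qed
        then obtain u where u: "u \<in> hom D (one D) H" and uc: "\<forall>y\<in>IObj N. Cmp D (c y) u = d y"
          using lim by blast
        have f1: "(\<lambda>v\<in>Vs N. Cmp D (c (IV v)) u) = x"
        proof
          fix v show "(\<lambda>v\<in>Vs N. Cmp D (c (IV v)) u) v = x v"
            using uc IV_in xe by (cases "v \<in> Vs N") (auto simp: d_def extensional_def)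
        qed
        have f2: "(\<lambda>e\<in>Es N. Cmp D (c (IE e)) u) = p"
        proof
          fix e show "(\<lambda>e\<in>Es N. Cmp D (c (IE e)) u) e = p e"
            using uc IE_in pe by (cases "e \<in> Es N") (auto simp: d_def extensional_def)
        qed
        have "?F u = (x, p)" using f1 f2 by simp
        then show "z \<in> ?F ` hom D (one D) H" using u z by (simp add: image_iff) (metis)
      qed
    qed
  qed
qed

end
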